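(* Let $(Y,X,W_1,W_2)$ with $W_1\in\mathbb R^{d_1}$, $W_2\in\mathbb R^{d_2}$ ($d_2\ge1$) have finite second moments, and suppose the joint distribution of $(Y,X,W_1)$ is known. Suppose (A1) $\operatorname{var}(Y,X,W_1,W_2)$ is positive definite and $\pi_2=0$. Then (i) $\beta_{\text{long}}=\beta_{\text{med}}$, and (ii) the identified set for $\gamma_1$ is $\mathbb R^{d_1}$: for every $g_1\in\mathbb R^{d_1}$ there exists a random vector $(\tilde Y,\tilde X,\tilde W_1,\tilde W_2)$ with $(\tilde Y,\tilde X,\tilde W_1)\overset{d}{=}(Y,X,W_1)$, satisfying (A1) and $\pi_2=0$, whose long-regression coefficient on $\tilde W_1$ equals $g_1$.
   Context: $\beta_{\text{long}},\gamma_1,\gamma_2$ are the coefficients on $X,W_1,W_2$ in the linear projection of $Y$ on $(1,X,W_1,W_2)$; $\pi_1,\pi_2$ are the coefficients on $W_1,W_2$ in the linear projection of $X$ on $(1,W_1,W_2)$; $\beta_{\text{med}}$ is the coefficient on $X$ in the linear projection of $Y$ on $(1,X,W_1)$. *)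

theory Defs
  imports "HOL-Probability.Probability"
begin

definition ExpM :: "'a measure \<Rightarrow> ('a \<Rightarrow> real) \<Rightarrow> real" where
  "ExpM M f = integral\<^sup>L M f"

definition cov :: "'a measure \<Rightarrow> ('a \<Rightarrow> real) \<Rightarrow> ('a \<Rightarrow> real) \<Rightarrow> real" where
  "cov M f g = ExpM M (\<lambda>\<omega>. (f \<omega> - ExpM M f) * (g \<omega> - ExpM M g))"

definition var_pos_def :: "'a measure \<Rightarrow> ('a \<Rightarrow> 'v::euclidean_space) \<Rightarrow> bool" where
  "var_pos_def M Z \<longleftrightarrow>
     (\<forall>t::'v. t \<noteq> 0 \<longrightarrow>
        (\<Sum>i\<in>Basis. \<Sum>j\<in>Basis. (t \<bullet> i) * (t \<bullet> j) *
            cov M (\<lambda>\<omega>. Z \<omega> \<bullet> i) (\<lambda>\<omega>. Z \<omega> \<bullet> j)) > 0)"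

definition lin_proj :: "'a measure \<Rightarrow> ('a \<Rightarrow> real) \<Rightarrow> ('a \<Rightarrow> 'v::euclidean_space) \<Rightarrow> real \<times> 'v" where
  "lin_proj M Y R = (THE (c, b). \<forall>c' b'.
      ExpM M (\<lambda>\<omega>. (Y \<omega> - c - b \<bullet> R \<omega>)\<^sup>2) \<le> ExpM M (\<lambda>\<omega>. (Y \<omega> - c' - b' \<bullet> R \<omega>)\<^sup>2))"

definition second_moments ::
  "'a measure \<Rightarrow> ('a \<Rightarrow> real) \<Rightarrow> ('a \<Rightarrow> real) \<Rightarrow> ('a \<Rightarrow> real^'d1) \<Rightarrow> ('a \<Rightarrow> real^'d2) \<Rightarrow> bool" where
  "second_moments M Y X W1 W2 \<longleftrightarrow>
     Y \<in> borel_measurable M \<and> X \<in> borel_measurable M \<and>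
     W1 \<in> borel_measurable M \<and> W2 \<in> borel_measurable M \<and>
     integrable M (\<lambda>\<omega>. (Y \<omega>)\<^sup>2) \<and> integrable M (\<lambda>\<omega>. (X \<omega>)\<^sup>2) \<and>
     integrable M (\<lambda>\<omega>. (norm (W1 \<omega>))\<^sup>2) \<and> integrable M (\<lambda>\<omega>. (norm (W2 \<omega>))\<^sup>2)"

definition A1_pd ::
  "'a measure \<Rightarrow> ('a \<Rightarrow> real) \<Rightarrow> ('a \<Rightarrow> real) \<Rightarrow> ('a \<Rightarrow> real^'d1) \<Rightarrow> ('a \<Rightarrow> real^'d2) \<Rightarrow> bool" where
  "A1_pd M Y X W1 W2 \<longleftrightarrow> var_pos_def M (\<lambda>\<omega>. (Y \<omega>, X \<omega>, W1 \<omega>, W2 \<omega>))"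

definition long_proj where
  "long_proj M Y X W1 W2 = lin_proj M Y (\<lambda>\<omega>. (X \<omega>, W1 \<omega>, W2 \<omega>))"

definition beta_long ::
  "'a measure \<Rightarrow> ('a \<Rightarrow> real) \<Rightarrow> ('a \<Rightarrow> real) \<Rightarrow> ('a \<Rightarrow> real^'d1) \<Rightarrow> ('a \<Rightarrow> real^'d2) \<Rightarrow> real" where
  "beta_long M Y X W1 W2 = fst (snd (long_proj M Y X W1 W2))"

definition gamma1 ::
  "'a measure \<Rightarrow> ('a \<Rightarrow> real) \<Rightarrow> ('a \<Rightarrow> real) \<Rightarrow> ('a \<Rightarrow> real^'d1) \<Rightarrow> ('a \<Rightarrow> real^'d2) \<Rightarrow> real^'d1" where
  "gamma1 M Y X W1 W2 = fst (snd (snd (long_proj M Y X W1 W2)))"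

definition pi2 ::
  "'a measure \<Rightarrow> ('a \<Rightarrow> real) \<Rightarrow> ('a \<Rightarrow> real^'d1) \<Rightarrow> ('a \<Rightarrow> real^'d2) \<Rightarrow> real^'d2" where
  "pi2 M X W1 W2 = snd (snd (lin_proj M X (\<lambda>\<omega>. (W1 \<omega>, W2 \<omega>))))"

definition beta_med ::
  "'a measure \<Rightarrow> ('a \<Rightarrow> real) \<Rightarrow> ('a \<Rightarrow> real) \<Rightarrow> ('a \<Rightarrow> real^'d1) \<Rightarrow> real" where
  "beta_med M Y X W1 = fst (snd (lin_proj M Y (\<lambda>\<omega>. (X \<omega>, W1 \<omega>))))"

end

theory Submission
  imports Defs
begin


definition L2 :: "'a measure \<Rightarrow> ('a \<Rightarrow> real) \<Rightarrow> bool" where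
  "L2 M f \<longleftrightarrow> f \<in> borel_measurable M \<and> integrable M (\<lambda>x. (f x)\<^sup>2)"

definition vL2 :: "'a measure \<Rightarrow> ('a \<Rightarrow> 'v::euclidean_space) \<Rightarrow> bool" where
  "vL2 M Z \<longleftrightarrow> Z \<in> borel_measurable M \<and> integrable M (\<lambda>x. (norm (Z x))\<^sup>2)"

lemma L2_meas: "L2 M f \<Longrightarrow> f \<in> borel_measurable M"
  by (simp add: L2_def)

lemma L2_const: "prob_space M \<Longrightarrow> L2 M (\<lambda>x. c)"
  unfolding L2_def by (simp add: prob_space.finite_measure finite_measure.integrable_const)

lemma L2_add:
  assumes "L2 M f" "L2 M g" shows "L2 M (\<lambda>x. f x + g x)"
proof -
  have m[measurable]: "f \<in> borel_measurable M" "g \<in> borel_measurable M" using assms by (auto simp: L2_def)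
  have int: "integrable M (\<lambda>x. 2 * (f x)\<^sup>2 + 2 * (g x)\<^sup>2)" using assms by (auto simp: L2_def)
  have b: "norm ((f x + g x)\<^sup>2) \<le> norm (2 * (f x)\<^sup>2 + 2 * (g x)\<^sup>2)" for x
  proof -
    have e: "2 * (f x)\<^sup>2 + 2 * (g x)\<^sup>2 - (f x + g x)\<^sup>2 = (f x - g x)\<^sup>2"
      by (simp add: power2_eq_square algebra_simps)
    have "0 \<le> (f x - g x)\<^sup>2" by simp
    then have "(f x + g x)\<^sup>2 \<le> 2 * (f x)\<^sup>2 + 2 * (g x)\<^sup>2" using e by linarith
    then show ?thesis by simp
  qed
  have "integrable M (\<lambda>x. (f x + g x)\<^sup>2)"
    apply (rule Bochner_Integration.integrable_bound[OF int])
     apply measurable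
    apply (rule AE_I2)
    apply (rule b)
    done
  then show ?thesis by (simp add: L2_def)
qed

lemma L2_cmult: assumes "L2 M f" shows "L2 M (\<lambda>x. c * f x)"
proof -
  have m[measurable]: "f \<in> borel_measurable M" using assms by (auto simp: L2_def)
  show ?thesis using assms by (simp add: L2_def power_mult_distrib)
qed

lemma L2_minus: assumes "L2 M f" shows "L2 M (\<lambda>x. - f x)"
  using L2_cmult[OF assms, of "-1"] by simp

lemma L2_diff: assumes "L2 M f" "L2 M g" shows "L2 M (\<lambda>x. f x - g x)"
  using L2_add[OF assms(1) L2_minus[OF assms(2)]] by simp

lemma L2_sum: assumes P: "prob_space M" and f: "\<And>i. i \<in> I \<Longrightarrow> L2 M (f i)"
  shows "L2 M (\<lambda>x. \<Sum>i\<in>I. f i x)"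
proof (cases "finite I")
  case True
  then show ?thesis using f
  proof (induction I rule: finite_induct)
    case empty show ?case using L2_const[OF P, of 0] by simp
  next
    case (insert i A)
    have "L2 M (\<lambda>x. f i x + (\<Sum>j\<in>A. f j x))"
      by (rule L2_add) (use insert in auto)
    then show ?case using insert.hyps by simp
  qed
next
  case False then show ?thesis using L2_const[OF P, of 0] by simp
qed

lemma L2_int: assumes P: "prob_space M" and f: "L2 M f" shows "integrable M f"
proof -
  interpret prob_space M by (rule P)
  have m: "f \<in> borel_measurable M" and i: "integrable M (\<lambda>x. (f x)\<^sup>2)" using f by (simp_all add: L2_def)
  show ?thesis by (rule square_integrable_imp_integrable[OF m i])
qed

lemma L2_prod_int: assumes "L2 M f" "L2 M g" shows "integrable M (\<lambda>x. f x * g x)"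
proof -
  have m[measurable]: "f \<in> borel_measurable M" "g \<in> borel_measurable M" using assms by (auto simp: L2_def)
  have int: "integrable M (\<lambda>x. (f x)\<^sup>2 + (g x)\<^sup>2)" using assms by (auto simp: L2_def)
  have b: "norm (f x * g x) \<le> norm ((f x)\<^sup>2 + (g x)\<^sup>2)" for x
  proof -
    have e1: "(f x)\<^sup>2 + (g x)\<^sup>2 - 2 * (f x * g x) = (f x - g x)\<^sup>2"
      by (simp add: power2_eq_square algebra_simps)
    have e2: "(f x)\<^sup>2 + (g x)\<^sup>2 + 2 * (f x * g x) = (f x + g x)\<^sup>2"
      by (simp add: power2_eq_square algebra_simps)
    have "0 \<le> (f x - g x)\<^sup>2" "0 \<le> (f x + g x)\<^sup>2" "0 \<le> (f x)\<^sup>2" "0 \<le> (g x)\<^sup>2" by simp_all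
    then have "f x * g x \<le> (f x)\<^sup>2 + (g x)\<^sup>2" "- (f x * g x) \<le> (f x)\<^sup>2 + (g x)\<^sup>2"
      using e1 e2 by linarith+
    then have "\<bar>f x * g x\<bar> \<le> (f x)\<^sup>2 + (g x)\<^sup>2" by (simp add: abs_le_iff)
    then show ?thesis by simp
  qed
  show ?thesis
    apply (rule Bochner_Integration.integrable_bound[OF int])
     apply measurable
    apply (rule AE_I2)
    apply (rule b)
    done
qed

lemma vL2_L2: "vL2 M Z \<Longrightarrow> L2 M (\<lambda>x. t \<bullet> Z x)"
proof -
  assume a: "vL2 M Z"
  have m[measurable]: "Z \<in> borel_measurable M" using a by (simp add: vL2_def)
  have int: "integrable M (\<lambda>x. (norm t)\<^sup>2 * (norm (Z x))\<^sup>2)" using a by (simp add: vL2_def)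
  have b: "norm ((t \<bullet> Z x)\<^sup>2) \<le> norm ((norm t)\<^sup>2 * (norm (Z x))\<^sup>2)" for x
  proof -
    have "\<bar>t \<bullet> Z x\<bar> \<le> norm t * norm (Z x)" by (rule Cauchy_Schwarz_ineq2)
    then have "\<bar>t \<bullet> Z x\<bar>\<^sup>2 \<le> (norm t * norm (Z x))\<^sup>2"
      by (intro power_mono) auto
    then show ?thesis
      by (simp add: power_mult_distrib)
  qed
  have "integrable M (\<lambda>x. (t \<bullet> Z x)\<^sup>2)"
    apply (rule Bochner_Integration.integrable_bound[OF int])
     apply measurable
    apply (rule AE_I2)
    apply (rule b)
    done
  then show ?thesis by (simp add: L2_def)
qed

lemma L2_vL2: "L2 M f \<Longrightarrow> vL2 M f"
  by (simp add: L2_def vL2_def)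

lemma vL2_Pair: "vL2 M A \<Longrightarrow> vL2 M B \<Longrightarrow> vL2 M (\<lambda>x. (A x, B x))"
  unfolding vL2_def by (auto simp: norm_Pair)

lemma vL2_scaleR: "L2 M f \<Longrightarrow> vL2 M (\<lambda>x. f x *\<^sub>R e)"
  unfolding vL2_def L2_def by (auto simp: power_mult_distrib)

lemma vL2_real: "vL2 M (f :: _ \<Rightarrow> real) \<Longrightarrow> L2 M f"
  unfolding vL2_def L2_def by auto

definition vr :: "'a measure \<Rightarrow> ('a \<Rightarrow> real) \<Rightarrow> real" where
  "vr M f = ExpM M (\<lambda>x. (f x - ExpM M f)\<^sup>2)"

lemma Exp_sum: assumes "\<And>i. i \<in> I \<Longrightarrow> integrable M (f i)"
  shows "ExpM M (\<lambda>x. \<Sum>i\<in>I. f i x) = (\<Sum>i\<in>I. ExpM M (f i))"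
  unfolding ExpM_def by (intro Bochner_Integration.integral_sum assms)

lemma Exp_cmult: "ExpM M (\<lambda>x. c * f x) = c * ExpM M f"
  unfolding ExpM_def by simp

lemma Exp_const: "prob_space M \<Longrightarrow> ExpM M (\<lambda>x. c) = c"
  unfolding ExpM_def by (simp add: prob_space.prob_space)

lemma Exp_add: "integrable M f \<Longrightarrow> integrable M g \<Longrightarrow> ExpM M (\<lambda>x. f x + g x) = ExpM M f + ExpM M g"
  unfolding ExpM_def by simp

lemma Exp_diff: "integrable M f \<Longrightarrow> integrable M g \<Longrightarrow> ExpM M (\<lambda>x. f x - g x) = ExpM M f - ExpM M g"
  unfolding ExpM_def by simp

lemma var_form:
  fixes Z :: "'a \<Rightarrow> 'v::euclidean_space"
  assumes P: "prob_space M" and Z: "vL2 M Z"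
  shows "(\<Sum>i\<in>Basis. \<Sum>j\<in>Basis. (t \<bullet> i) * (t \<bullet> j) * cov M (\<lambda>\<omega>. Z \<omega> \<bullet> i) (\<lambda>\<omega>. Z \<omega> \<bullet> j))
        = vr M (\<lambda>\<omega>. t \<bullet> Z \<omega>)"
proof -
  define m where "m i = ExpM M (\<lambda>\<omega>. Z \<omega> \<bullet> i)" for i
  define D where "D i \<omega> = Z \<omega> \<bullet> i - m i" for i \<omega>
  have LZ: "L2 M (\<lambda>\<omega>. Z \<omega> \<bullet> i)" for i
    using vL2_L2[OF Z, of i] by (simp add: inner_commute)
  have LD: "L2 M (D i)" for i
    unfolding D_def by (intro L2_diff LZ L2_const P)
  have c: "cov M (\<lambda>\<omega>. Z \<omega> \<bullet> i) (\<lambda>\<omega>. Z \<omega> \<bullet> j) = ExpM M (\<lambda>\<omega>. D i \<omega> * D j \<omega>)" for i j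
    unfolding cov_def D_def m_def by simp
  have "(\<Sum>i\<in>Basis. \<Sum>j\<in>Basis. (t \<bullet> i) * (t \<bullet> j) * cov M (\<lambda>\<omega>. Z \<omega> \<bullet> i) (\<lambda>\<omega>. Z \<omega> \<bullet> j))
      = (\<Sum>i\<in>Basis. \<Sum>j\<in>Basis. ExpM M (\<lambda>\<omega>. ((t \<bullet> i) * (t \<bullet> j)) * (D i \<omega> * D j \<omega>)))"
    by (simp add: c Exp_cmult)
  also have "\<dots> = (\<Sum>i\<in>Basis. ExpM M (\<lambda>\<omega>. \<Sum>j\<in>Basis. ((t \<bullet> i) * (t \<bullet> j)) * (D i \<omega> * D j \<omega>)))"
    by (intro sum.cong refl Exp_sum[symmetric] integrable_mult_right L2_prod_int LD)
  also have "\<dots> = ExpM M (\<lambda>\<omega>. \<Sum>i\<in>Basis. \<Sum>j\<in>Basis. ((t \<bullet> i) * (t \<bullet> j)) * (D i \<omega> * D j \<omega>))"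
    using LD by (subst Exp_sum) (auto intro!: integrable_mult_right L2_prod_int)
  also have "\<dots> = ExpM M (\<lambda>\<omega>. (\<Sum>i\<in>Basis. (t \<bullet> i) * D i \<omega>)\<^sup>2)"
  proof -
    have sq: "(\<Sum>i\<in>Basis. (t \<bullet> i) * D i \<omega>)\<^sup>2 = (\<Sum>i\<in>Basis. \<Sum>j\<in>Basis. ((t \<bullet> i) * (t \<bullet> j)) * (D i \<omega> * D j \<omega>))" for \<omega>
      unfolding power2_eq_square sum_product by (intro sum.cong refl) (simp add: algebra_simps)
    show ?thesis by (simp only: sq)
  qed
  also have "(\<lambda>\<omega>. \<Sum>i\<in>Basis. (t \<bullet> i) * D i \<omega>) = (\<lambda>\<omega>. t \<bullet> Z \<omega> - ExpM M (\<lambda>\<omega>. t \<bullet> Z \<omega>))"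
  proof
    fix \<omega>
    have e0: "t \<bullet> Z w = (\<Sum>i\<in>Basis. (t \<bullet> i) * (Z w \<bullet> i))" for w by (rule euclidean_inner)
    have e1: "t \<bullet> Z \<omega> = (\<Sum>i\<in>Basis. (t \<bullet> i) * (Z \<omega> \<bullet> i))" by (rule e0)
    have "ExpM M (\<lambda>\<omega>. t \<bullet> Z \<omega>) = ExpM M (\<lambda>\<omega>. \<Sum>i\<in>Basis. (t \<bullet> i) * (Z \<omega> \<bullet> i))"
      by (simp only: e0)
    also have "\<dots> = (\<Sum>i\<in>Basis. (t \<bullet> i) * m i)"
      by (subst Exp_sum) (auto simp: m_def Exp_cmult intro!: L2_int[OF P] LZ)
    finally show "(\<Sum>i\<in>Basis. (t \<bullet> i) * D i \<omega>) = t \<bullet> Z \<omega> - ExpM M (\<lambda>\<omega>. t \<bullet> Z \<omega>)"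
      unfolding e1 D_def by (simp add: right_diff_distrib sum_subtractf)
  qed
  finally show ?thesis by (simp add: vr_def)
qed

lemma var_pos_def_iff:
  fixes Z :: "'a \<Rightarrow> 'v::euclidean_space"
  assumes P: "prob_space M" and Z: "vL2 M Z"
  shows "var_pos_def M Z \<longleftrightarrow> (\<forall>t. t \<noteq> 0 \<longrightarrow> vr M (\<lambda>\<omega>. t \<bullet> Z \<omega>) > 0)"
  unfolding var_pos_def_def using var_form[OF P Z] by simp




definition orth :: "'a measure \<Rightarrow> ('a \<Rightarrow> real) \<Rightarrow> ('a \<Rightarrow> 'v::euclidean_space) \<Rightarrow> bool" where
  "orth M e R \<longleftrightarrow> ExpM M e = 0 \<and> (\<forall>t. ExpM M (\<lambda>\<omega>. e \<omega> * (t \<bullet> R \<omega>)) = 0)"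

lemma prob_int_const: "prob_space M \<Longrightarrow> integrable M (\<lambda>x. c::real)"
  by (simp add: prob_space.finite_measure finite_measure.integrable_const)

lemma prob_integral_const: "prob_space M \<Longrightarrow> integral\<^sup>L M (\<lambda>x. c::real) = c"
  by (simp add: prob_space.prob_space)

lemma orth_aff:
  assumes P: "prob_space M" and o: "orth M e R" and e: "L2 M e" and R: "vL2 M R"
  shows "ExpM M (\<lambda>\<omega>. e \<omega> * (a + t \<bullet> R \<omega>)) = 0"
proof -
  have "ExpM M (\<lambda>\<omega>. e \<omega> * (a + t \<bullet> R \<omega>)) = ExpM M (\<lambda>\<omega>. a * e \<omega> + e \<omega> * (t \<bullet> R \<omega>))"
    by (simp add: algebra_simps)
  also have "\<dots> = a * ExpM M e + ExpM M (\<lambda>\<omega>. e \<omega> * (t \<bullet> R \<omega>))"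
    by (subst Exp_add) (auto simp: Exp_cmult intro!: L2_int[OF P e] L2_prod_int[OF e vL2_L2[OF R]])
  finally show ?thesis using o by (simp add: orth_def)
qed

lemma Exp_cmult_right: "ExpM M (\<lambda>x. f x * c) = ExpM M f * c"
  unfolding ExpM_def by simp

lemma vr_alt: assumes P: "prob_space M" and f: "L2 M f"
  shows "vr M f = ExpM M (\<lambda>x. (f x)\<^sup>2) - (ExpM M f)\<^sup>2"
proof -
  define m where "m = ExpM M f"
  have i1: "integrable M f" by (rule L2_int[OF P f])
  have i2: "integrable M (\<lambda>x. (f x)\<^sup>2)" using f by (simp add: L2_def)
  have "vr M f = ExpM M (\<lambda>x. (f x)\<^sup>2 - (2 * m * f x - m\<^sup>2))"
    unfolding vr_def m_def[symmetric] by (simp add: power2_eq_square algebra_simps)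
  also have "\<dots> = ExpM M (\<lambda>x. (f x)\<^sup>2) - (2 * m * m - m\<^sup>2)"
    using i1 i2 P by (simp add: ExpM_def prob_int_const prob_integral_const prob_space.prob_space m_def)
  finally show ?thesis by (simp add: m_def power2_eq_square)
qed

lemma vr_shift: assumes P: "prob_space M" and f: "L2 M f"
  shows "vr M (\<lambda>x. c + f x) = vr M f"
proof -
  have "ExpM M (\<lambda>x. c + f x) = c + ExpM M f"
    using L2_int[OF P f] P by (simp add: ExpM_def prob_int_const prob_integral_const prob_space.prob_space)
  then show ?thesis by (simp add: vr_def)
qed

lemma vr_nonneg: "vr M f \<ge> 0"
  unfolding vr_def ExpM_def by simp

lemma Exp_sq_ge_vr: assumes P: "prob_space M" and f: "L2 M f"
  shows "ExpM M (\<lambda>x. (f x)\<^sup>2) \<ge> vr M f"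
  using vr_alt[OF P f] by simp

lemma vr_cross: assumes P: "prob_space M" and f: "L2 M f"
  shows "ExpM M (\<lambda>x. (f x - ExpM M f) * f x) = vr M f"
proof -
  define m where "m = ExpM M f"
  have i1: "integrable M f" by (rule L2_int[OF P f])
  have i2: "integrable M (\<lambda>x. (f x)\<^sup>2)" using f by (simp add: L2_def)
  have "ExpM M (\<lambda>x. (f x - m) * f x) = ExpM M (\<lambda>x. (f x)\<^sup>2 - m * f x)"
    by (simp add: power2_eq_square algebra_simps)
  also have "\<dots> = ExpM M (\<lambda>x. (f x)\<^sup>2) - m * m"
    using i1 i2 by (simp add: ExpM_def m_def)
  finally show ?thesis using vr_alt[OF P f] by (simp add: m_def power2_eq_square)
qed

lemma Exp_inner_expand:
  fixes R :: "'a \<Rightarrow> 'v::euclidean_space"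
  assumes P: "prob_space M" and g: "L2 M g" and R: "vL2 M R"
  shows "ExpM M (\<lambda>\<omega>. g \<omega> * (t \<bullet> R \<omega>)) = (\<Sum>i\<in>Basis. (t \<bullet> i) * ExpM M (\<lambda>\<omega>. g \<omega> * (i \<bullet> R \<omega>)))"
proof -
  have e: "g \<omega> * (t \<bullet> R \<omega>) = (\<Sum>i\<in>Basis. (t \<bullet> i) * (g \<omega> * (i \<bullet> R \<omega>)))" for \<omega>
  proof -
    have "t \<bullet> R \<omega> = (\<Sum>i\<in>Basis. (t \<bullet> i) * (R \<omega> \<bullet> i))" by (rule euclidean_inner)
    then show ?thesis by (simp add: sum_distrib_left inner_commute mult_ac)
  qed
  show ?thesis
    unfolding e by (subst Exp_sum) (auto simp: Exp_cmult intro!: L2_prod_int g vL2_L2[OF R])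
qed

lemma proj_char:
  fixes R :: "'a \<Rightarrow> 'v::euclidean_space"
  assumes P: "prob_space M" and R: "vL2 M R" and Y: "L2 M Y"
    and pd: "\<forall>t. t \<noteq> 0 \<longrightarrow> vr M (\<lambda>\<omega>. t \<bullet> R \<omega>) > 0"
    and o: "orth M (\<lambda>\<omega>. Y \<omega> - c - b \<bullet> R \<omega>) R"
  shows "lin_proj M Y R = (c, b)"
proof -
  define Q where "Q c' b' = ExpM M (\<lambda>\<omega>. (Y \<omega> - c' - b' \<bullet> R \<omega>)\<^sup>2)" for c' b'
  define e where "e \<omega> = Y \<omega> - c - b \<bullet> R \<omega>" for \<omega>
  have Le: "L2 M e" unfolding e_def
    by (intro L2_diff Y L2_const P vL2_L2[OF R])
  have key: "Q c' b' = Q c b + ExpM M (\<lambda>\<omega>. ((c - c') + (b - b') \<bullet> R \<omega>)\<^sup>2)" for c' b'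
  proof -
    define d where "d \<omega> = (c - c') + (b - b') \<bullet> R \<omega>" for \<omega>
    have Ld: "L2 M d" unfolding d_def by (intro L2_add L2_const P vL2_L2[OF R])
    have ed: "ExpM M (\<lambda>\<omega>. e \<omega> * d \<omega>) = 0"
      unfolding d_def by (rule orth_aff[OF P _ Le R]) (use o in \<open>simp add: e_def[abs_def]\<close>)
    have pt: "(Y \<omega> - c' - b' \<bullet> R \<omega>)\<^sup>2 = (e \<omega>)\<^sup>2 + 2 * (e \<omega> * d \<omega>) + (d \<omega>)\<^sup>2" for \<omega>
      unfolding e_def d_def by (simp add: power2_eq_square algebra_simps inner_diff_left)
    have "Q c' b' = ExpM M (\<lambda>\<omega>. (e \<omega>)\<^sup>2 + 2 * (e \<omega> * d \<omega>) + (d \<omega>)\<^sup>2)"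
      unfolding Q_def pt ..
    also have "\<dots> = ExpM M (\<lambda>\<omega>. (e \<omega>)\<^sup>2) + 2 * ExpM M (\<lambda>\<omega>. e \<omega> * d \<omega>) + ExpM M (\<lambda>\<omega>. (d \<omega>)\<^sup>2)"
      using Le Ld L2_prod_int[OF Le Ld] unfolding ExpM_def L2_def by simp
    finally show ?thesis using ed by (simp add: Q_def e_def d_def)
  qed
  have nn: "ExpM M (\<lambda>\<omega>. (f \<omega>)\<^sup>2) \<ge> 0" for f :: "'a \<Rightarrow> real"
    unfolding ExpM_def by simp
  have opt: "\<forall>c' b'. Q c b \<le> Q c' b'"
    using key nn by (metis le_add_same_cancel1)
  have uniq: "c' = c \<and> b' = b" if h: "\<forall>c'' b''. Q c' b' \<le> Q c'' b''" for c' b'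
  proof -
    have "Q c' b' \<le> Q c b" using h by blast
    then have z: "ExpM M (\<lambda>\<omega>. ((c - c') + (b - b') \<bullet> R \<omega>)\<^sup>2) \<le> 0" using key[of c' b'] by simp
    have bb: "b' = b"
    proof (rule ccontr)
      assume "b' \<noteq> b"
      then have "b - b' \<noteq> 0" by simp
      then have "vr M (\<lambda>\<omega>. (b - b') \<bullet> R \<omega>) > 0" using pd by blast
      also have "vr M (\<lambda>\<omega>. (b - b') \<bullet> R \<omega>) = vr M (\<lambda>\<omega>. (c - c') + (b - b') \<bullet> R \<omega>)"
        by (rule vr_shift[symmetric, OF P vL2_L2[OF R]])
      also have "\<dots> \<le> ExpM M (\<lambda>\<omega>. ((c - c') + (b - b') \<bullet> R \<omega>)\<^sup>2)"
        by (rule Exp_sq_ge_vr[OF P]) (intro L2_add L2_const P vL2_L2[OF R])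
      finally show False using z by simp
    qed
    have "ExpM M (\<lambda>\<omega>. ((c - c') + (b - b') \<bullet> R \<omega>)\<^sup>2) = (c - c')\<^sup>2"
      using bb by (simp add: Exp_const[OF P])
    then have "(c - c')\<^sup>2 \<le> 0" using z by simp
    then have "c' = c" by simp
    then show ?thesis using bb by simp
  qed
  show ?thesis
    unfolding lin_proj_def
  proof (rule the_equality)
    show "case (c, b) of (c, b) \<Rightarrow> \<forall>c' b'. ExpM M (\<lambda>\<omega>. (Y \<omega> - c - b \<bullet> R \<omega>)\<^sup>2) \<le> ExpM M (\<lambda>\<omega>. (Y \<omega> - c' - b' \<bullet> R \<omega>)\<^sup>2)"
      using opt by (simp add: Q_def)
  next
    fix x assume "case x of (c, b) \<Rightarrow> \<forall>c' b'. ExpM M (\<lambda>\<omega>. (Y \<omega> - c - b \<bullet> R \<omega>)\<^sup>2) \<le> ExpM M (\<lambda>\<omega>. (Y \<omega> - c' - b' \<bullet> R \<omega>)\<^sup>2)"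
    then show "x = (c, b)" using uniq by (cases x) (auto simp: Q_def)
  qed
qed

lemma proj_exists:
  fixes R :: "'a \<Rightarrow> 'v::euclidean_space"
  assumes P: "prob_space M" and R: "vL2 M R" and Y: "L2 M Y"
    and pd: "\<forall>t. t \<noteq> 0 \<longrightarrow> vr M (\<lambda>\<omega>. t \<bullet> R \<omega>) > 0"
  shows "\<exists>c b. orth M (\<lambda>\<omega>. Y \<omega> - c - b \<bullet> R \<omega>) R"
proof -
  define cen where "cen b \<omega> = b \<bullet> R \<omega> - ExpM M (\<lambda>\<omega>. b \<bullet> R \<omega>)" for b \<omega>
  define C where "C b t = ExpM M (\<lambda>\<omega>. cen b \<omega> * (t \<bullet> R \<omega>))" for b t
  define CY where "CY t = ExpM M (\<lambda>\<omega>. (Y \<omega> - ExpM M Y) * (t \<bullet> R \<omega>))" for t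
  define A where "A b = (\<Sum>i\<in>Basis. C b i *\<^sub>R i)" for b
  have LR: "L2 M (\<lambda>\<omega>. t \<bullet> R \<omega>)" for t by (rule vL2_L2[OF R])
  have Lcen: "L2 M (cen b)" for b unfolding cen_def by (intro L2_diff LR L2_const P)
  have LYc: "L2 M (\<lambda>\<omega>. Y \<omega> - ExpM M Y)" by (intro L2_diff Y L2_const P)
  have cen_add: "cen (x + y) \<omega> = cen x \<omega> + cen y \<omega>" for x y \<omega>
  proof -
    have "ExpM M (\<lambda>\<omega>. (x + y) \<bullet> R \<omega>) = ExpM M (\<lambda>\<omega>. x \<bullet> R \<omega>) + ExpM M (\<lambda>\<omega>. y \<bullet> R \<omega>)"
      by (simp add: inner_add_left Exp_add L2_int[OF P LR])
    then show ?thesis by (simp add: cen_def inner_add_left)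
  qed
  have cen_scale: "cen (r *\<^sub>R x) \<omega> = r * cen x \<omega>" for r x \<omega>
    by (simp add: cen_def Exp_cmult right_diff_distrib)
  have C_add: "C (x + y) t = C x t + C y t" for x y t
    unfolding C_def cen_add distrib_right
    by (rule Exp_add) (intro L2_prod_int Lcen LR)+
  have C_scale: "C (r *\<^sub>R x) t = r * C x t" for r x t
    unfolding C_def cen_scale by (simp add: mult.assoc Exp_cmult)
  have C_lin_t: "C b t = (\<Sum>i\<in>Basis. (t \<bullet> i) * C b i)" for b t
    unfolding C_def by (rule Exp_inner_expand[OF P Lcen R])
  have CY_lin: "CY t = (\<Sum>i\<in>Basis. (t \<bullet> i) * CY i)" for t
    unfolding CY_def by (rule Exp_inner_expand[OF P LYc R])
  have inner_A: "t \<bullet> A b = C b t" for t b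
    unfolding A_def C_lin_t[of b t] by (simp add: inner_sum_right mult.commute)
  have lin: "linear A"
  proof (rule linearI)
    fix x y show "A (x + y) = A x + A y"
      unfolding A_def by (simp add: C_add scaleR_add_left sum.distrib)
  next
    fix r x show "A (r *\<^sub>R x) = r *\<^sub>R A x"
      unfolding A_def by (simp add: C_scale scaleR_sum_right)
  qed
  have inj: "inj A"
  proof -
    have "x = 0" if "A x = 0" for x
    proof (rule ccontr)
      assume "x \<noteq> 0"
      then have "vr M (\<lambda>\<omega>. x \<bullet> R \<omega>) > 0" using pd by blast
      moreover have "C x x = vr M (\<lambda>\<omega>. x \<bullet> R \<omega>)"
        unfolding C_def cen_def by (rule vr_cross[OF P LR])
      moreover have "C x x = x \<bullet> A x" by (simp add: inner_A)
      ultimately show False using that by simp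
    qed
    then show ?thesis using linear_injective_0[OF lin] by blast
  qed
  have "surj A" using linear_injective_imp_surjective[OF lin inj] by simp
  then obtain b where Ab: "A b = (\<Sum>i\<in>Basis. CY i *\<^sub>R i)" by (metis surjD)
  have Cb: "C b t = CY t" for t
  proof -
    have "C b t = t \<bullet> (\<Sum>i\<in>Basis. CY i *\<^sub>R i)" using inner_A[of t b] Ab by simp
    also have "\<dots> = CY t" by (simp add: inner_sum_right CY_lin[of t] mult.commute)
    finally show ?thesis .
  qed
  define c where "c = ExpM M Y - ExpM M (\<lambda>\<omega>. b \<bullet> R \<omega>)"
  have eeq: "Y \<omega> - c - b \<bullet> R \<omega> = (Y \<omega> - ExpM M Y) - cen b \<omega>" for \<omega>
    by (simp add: c_def cen_def)
  have "orth M (\<lambda>\<omega>. Y \<omega> - c - b \<bullet> R \<omega>) R"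
    unfolding orth_def eeq
  proof
    show "ExpM M (\<lambda>\<omega>. Y \<omega> - ExpM M Y - cen b \<omega>) = 0"
      unfolding cen_def using L2_int[OF P Y] L2_int[OF P LR] P
      by (simp add: ExpM_def prob_int_const prob_integral_const prob_space.prob_space)
    show "\<forall>t. ExpM M (\<lambda>\<omega>. (Y \<omega> - ExpM M Y - cen b \<omega>) * (t \<bullet> R \<omega>)) = 0"
    proof
      fix t
      have "ExpM M (\<lambda>\<omega>. (Y \<omega> - ExpM M Y - cen b \<omega>) * (t \<bullet> R \<omega>))
          = ExpM M (\<lambda>\<omega>. (Y \<omega> - ExpM M Y) * (t \<bullet> R \<omega>) - cen b \<omega> * (t \<bullet> R \<omega>))"
        by (simp add: left_diff_distrib)
      also have "\<dots> = CY t - C b t"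
        unfolding CY_def C_def by (rule Exp_diff) (intro L2_prod_int LYc Lcen LR)+
      finally show "ExpM M (\<lambda>\<omega>. (Y \<omega> - ExpM M Y - cen b \<omega>) * (t \<bullet> R \<omega>)) = 0"
        using Cb by simp
    qed
  qed
  then show ?thesis by blast
qed




lemma sm_facts:
  assumes "second_moments M Y X W1 W2"
  shows "L2 M Y" "L2 M X" "vL2 M W1" "vL2 M W2"
  using assms unfolding second_moments_def L2_def vL2_def by auto

lemma Exp_lin3:
  assumes "integrable M f" "integrable M g" "integrable M h"
  shows "ExpM M (\<lambda>x. f x + a * g x + h x) = ExpM M f + a * ExpM M g + ExpM M h"
  using assms unfolding ExpM_def by simp

lemma pd_of_A1:
  assumes P: "prob_space M" and sm: "second_moments M Y X W1 W2" and A: "A1_pd M Y X W1 W2"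
  shows "\<forall>t. t \<noteq> 0 \<longrightarrow> vr M (\<lambda>\<omega>. t \<bullet> (Y \<omega>, X \<omega>, W1 \<omega>, W2 \<omega>)) > 0"
proof -
  have "vL2 M (\<lambda>\<omega>. (Y \<omega>, X \<omega>, W1 \<omega>, W2 \<omega>))"
    using sm_facts[OF sm] by (intro vL2_Pair L2_vL2) auto
  then show ?thesis using A var_pos_def_iff[OF P] unfolding A1_pd_def by blast
qed

lemma part1:
  fixes M :: "'a measure"
    and Y X :: "'a \<Rightarrow> real"
    and W1 :: "'a \<Rightarrow> real^'d1"
    and W2 :: "'a \<Rightarrow> real^'d2"
  assumes P: "prob_space M"
    and sm: "second_moments M Y X W1 W2"
    and A: "A1_pd M Y X W1 W2"
    and pi: "pi2 M X W1 W2 = 0"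
  shows "beta_long M Y X W1 W2 = beta_med M Y X W1"
proof -
  note F = sm_facts[OF sm]
  have LY: "L2 M Y" and LX: "L2 M X" and V1: "vL2 M W1" and V2: "vL2 M W2" using F by auto
  have pdZ: "\<forall>t. t \<noteq> 0 \<longrightarrow> vr M (\<lambda>\<omega>. t \<bullet> (Y \<omega>, X \<omega>, W1 \<omega>, W2 \<omega>)) > 0"
    by (rule pd_of_A1[OF P sm A])
  define Rm where "Rm \<omega> = (X \<omega>, W1 \<omega>)" for \<omega>
  define Rl where "Rl \<omega> = (X \<omega>, W1 \<omega>, W2 \<omega>)" for \<omega>
  define Rx where "Rx \<omega> = (W1 \<omega>, W2 \<omega>)" for \<omega>
  have VRm: "vL2 M Rm" unfolding Rm_def by (intro vL2_Pair L2_vL2 LX V1)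
  have VRl: "vL2 M Rl" unfolding Rl_def by (intro vL2_Pair L2_vL2 LX V1 V2)
  have VRx: "vL2 M Rx" unfolding Rx_def by (intro vL2_Pair L2_vL2 LX V1 V2)
  have pdm: "\<forall>t. t \<noteq> 0 \<longrightarrow> vr M (\<lambda>\<omega>. t \<bullet> Rm \<omega>) > 0"
  proof (intro allI impI)
    fix t :: "real \<times> (real^'d1)" assume "t \<noteq> 0"
    then have "(0::real, fst t, snd t, 0::real^'d2) \<noteq> 0" by (cases t) (auto simp: zero_prod_def)
    then have "vr M (\<lambda>\<omega>. (0::real, fst t, snd t, 0::real^'d2) \<bullet> (Y \<omega>, X \<omega>, W1 \<omega>, W2 \<omega>)) > 0" using pdZ by blast
    then show "vr M (\<lambda>\<omega>. t \<bullet> Rm \<omega>) > 0" by (cases t) (simp add: Rm_def)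
  qed
  have pdl: "\<forall>t. t \<noteq> 0 \<longrightarrow> vr M (\<lambda>\<omega>. t \<bullet> Rl \<omega>) > 0"
  proof (intro allI impI)
    fix t :: "real \<times> (real^'d1) \<times> (real^'d2)" assume "t \<noteq> 0"
    then have "(0::real, t) \<noteq> 0" by (auto simp: zero_prod_def)
    then have "vr M (\<lambda>\<omega>. (0::real, t) \<bullet> (Y \<omega>, X \<omega>, W1 \<omega>, W2 \<omega>)) > 0" using pdZ by blast
    then show "vr M (\<lambda>\<omega>. t \<bullet> Rl \<omega>) > 0" by (simp add: Rl_def)
  qed
  have pdx: "\<forall>t. t \<noteq> 0 \<longrightarrow> vr M (\<lambda>\<omega>. t \<bullet> Rx \<omega>) > 0"
  proof (intro allI impI)
    fix t :: "(real^'d1) \<times> (real^'d2)" assume "t \<noteq> 0"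
    then have "(0::real, 0::real, t) \<noteq> 0" by (auto simp: zero_prod_def)
    then have "vr M (\<lambda>\<omega>. (0::real, 0::real, t) \<bullet> (Y \<omega>, X \<omega>, W1 \<omega>, W2 \<omega>)) > 0" using pdZ by blast
    then show "vr M (\<lambda>\<omega>. t \<bullet> Rx \<omega>) > 0" by (simp add: Rx_def)
  qed
  obtain c b where om: "orth M (\<lambda>\<omega>. Y \<omega> - c - b \<bullet> Rm \<omega>) Rm"
    using proj_exists[OF P VRm LY pdm] by blast
  obtain cl bl where ol: "orth M (\<lambda>\<omega>. Y \<omega> - cl - bl \<bullet> Rl \<omega>) Rl"
    using proj_exists[OF P VRl LY pdl] by blast
  obtain p0 p where ox: "orth M (\<lambda>\<omega>. X \<omega> - p0 - p \<bullet> Rx \<omega>) Rx"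
    using proj_exists[OF P VRx LX pdx] by blast
  have bm: "beta_med M Y X W1 = fst b"
    using proj_char[OF P VRm LY pdm om] unfolding beta_med_def Rm_def[abs_def] by simp
  have bl_eq: "beta_long M Y X W1 W2 = fst bl"
    using proj_char[OF P VRl LY pdl ol] unfolding beta_long_def long_proj_def Rl_def[abs_def] by simp
  have p2: "snd p = 0"
    using proj_char[OF P VRx LX pdx ox] pi unfolding pi2_def Rx_def[abs_def] by simp
  obtain \<beta> \<gamma> where b: "b = (\<beta>, \<gamma>)" by (cases b)
  obtain \<beta>l \<gamma>l gl where blp: "bl = (\<beta>l, \<gamma>l, gl)" by (cases bl) auto
  obtain p1 where p: "p = (p1, 0)" using p2 by (cases p) auto
  define Xt where "Xt \<omega> = X \<omega> - p0 - p \<bullet> Rx \<omega>" for \<omega>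
  define u where "u \<omega> = Y \<omega> - c - b \<bullet> Rm \<omega>" for \<omega>
  define ul where "ul \<omega> = Y \<omega> - cl - bl \<bullet> Rl \<omega>" for \<omega>
  have LXt: "L2 M Xt" unfolding Xt_def by (intro L2_diff LX L2_const P vL2_L2[OF VRx])
  have Lu: "L2 M u" unfolding u_def by (intro L2_diff LY L2_const P vL2_L2[OF VRm])
  have Lul: "L2 M ul" unfolding ul_def by (intro L2_diff LY L2_const P vL2_L2[OF VRl])
  have oXt: "orth M Xt Rx" using ox by (simp add: Xt_def[abs_def])
  have ou: "orth M u Rm" using om by (simp add: u_def[abs_def])
  have oul: "orth M ul Rl" using ol by (simp add: ul_def[abs_def])
  have Xt_m: "Xt \<omega> = -p0 + (1, -p1) \<bullet> Rm \<omega>" for \<omega>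
    by (simp add: Xt_def p Rx_def Rm_def)
  have Xt_l: "Xt \<omega> = -p0 + (1, -p1, 0) \<bullet> Rl \<omega>" for \<omega>
    by (simp add: Xt_def p Rx_def Rl_def)
  have uXt: "ExpM M (\<lambda>\<omega>. u \<omega> * Xt \<omega>) = 0"
    unfolding Xt_m by (rule orth_aff[OF P ou Lu VRm])
  have ulXt: "ExpM M (\<lambda>\<omega>. ul \<omega> * Xt \<omega>) = 0"
    unfolding Xt_l by (rule orth_aff[OF P oul Lul VRl])
  have LA: "L2 M (\<lambda>\<omega>. a + t \<bullet> Rx \<omega>)" for a t by (intro L2_add L2_const P vL2_L2[OF VRx])
  have K1: "ExpM M (\<lambda>\<omega>. Y \<omega> * Xt \<omega>) = \<beta> * ExpM M (\<lambda>\<omega>. X \<omega> * Xt \<omega>)"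
  proof -
    have eq: "Y \<omega> * Xt \<omega> = u \<omega> * Xt \<omega> + \<beta> * (X \<omega> * Xt \<omega>) + Xt \<omega> * (c + (\<gamma>, 0) \<bullet> Rx \<omega>)" for \<omega>
      by (simp add: u_def b Rm_def Rx_def algebra_simps)
    have "ExpM M (\<lambda>\<omega>. Y \<omega> * Xt \<omega>) = ExpM M (\<lambda>\<omega>. u \<omega> * Xt \<omega>) + \<beta> * ExpM M (\<lambda>\<omega>. X \<omega> * Xt \<omega>) + ExpM M (\<lambda>\<omega>. Xt \<omega> * (c + (\<gamma>, 0) \<bullet> Rx \<omega>))"
      unfolding eq by (intro Exp_lin3 L2_prod_int Lu LXt LX LA)
    also have "ExpM M (\<lambda>\<omega>. Xt \<omega> * (c + (\<gamma>, 0) \<bullet> Rx \<omega>)) = 0"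
      by (rule orth_aff[OF P oXt LXt VRx])
    finally show ?thesis using uXt by simp
  qed
  have K2: "ExpM M (\<lambda>\<omega>. Y \<omega> * Xt \<omega>) = \<beta>l * ExpM M (\<lambda>\<omega>. X \<omega> * Xt \<omega>)"
  proof -
    have eq: "Y \<omega> * Xt \<omega> = ul \<omega> * Xt \<omega> + \<beta>l * (X \<omega> * Xt \<omega>) + Xt \<omega> * (cl + (\<gamma>l, gl) \<bullet> Rx \<omega>)" for \<omega>
      by (simp add: ul_def blp Rl_def Rx_def algebra_simps)
    have "ExpM M (\<lambda>\<omega>. Y \<omega> * Xt \<omega>) = ExpM M (\<lambda>\<omega>. ul \<omega> * Xt \<omega>) + \<beta>l * ExpM M (\<lambda>\<omega>. X \<omega> * Xt \<omega>) + ExpM M (\<lambda>\<omega>. Xt \<omega> * (cl + (\<gamma>l, gl) \<bullet> Rx \<omega>))"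
      unfolding eq by (intro Exp_lin3 L2_prod_int Lul LXt LX LA)
    also have "ExpM M (\<lambda>\<omega>. Xt \<omega> * (cl + (\<gamma>l, gl) \<bullet> Rx \<omega>)) = 0"
      by (rule orth_aff[OF P oXt LXt VRx])
    finally show ?thesis using ulXt by simp
  qed
  have K3: "ExpM M (\<lambda>\<omega>. X \<omega> * Xt \<omega>) > 0"
  proof -
    have eq: "X \<omega> * Xt \<omega> = (Xt \<omega>)\<^sup>2 + 1 * 0 + Xt \<omega> * (p0 + p \<bullet> Rx \<omega>)" for \<omega>
      by (simp add: Xt_def power2_eq_square algebra_simps)
    have "ExpM M (\<lambda>\<omega>. X \<omega> * Xt \<omega>) = ExpM M (\<lambda>\<omega>. (Xt \<omega>)\<^sup>2) + 1 * ExpM M (\<lambda>\<omega>. 0) + ExpM M (\<lambda>\<omega>. Xt \<omega> * (p0 + p \<bullet> Rx \<omega>))"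
      unfolding eq by (intro Exp_lin3 L2_prod_int LXt LA) (use LXt in \<open>auto simp: L2_def\<close>)
    also have "ExpM M (\<lambda>\<omega>. Xt \<omega> * (p0 + p \<bullet> Rx \<omega>)) = 0"
      by (rule orth_aff[OF P oXt LXt VRx])
    finally have e1: "ExpM M (\<lambda>\<omega>. X \<omega> * Xt \<omega>) = ExpM M (\<lambda>\<omega>. (Xt \<omega>)\<^sup>2)" by (simp add: ExpM_def)
    have "(1::real, -p1) \<noteq> 0" by (simp add: zero_prod_def)
    then have "0 < vr M (\<lambda>\<omega>. (1, -p1) \<bullet> Rm \<omega>)" using pdm by blast
    also have "\<dots> = vr M Xt"
      unfolding Xt_m by (rule vr_shift[symmetric, OF P vL2_L2[OF VRm]])
    also have "\<dots> \<le> ExpM M (\<lambda>\<omega>. (Xt \<omega>)\<^sup>2)" by (rule Exp_sq_ge_vr[OF P LXt])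
    finally show ?thesis using e1 by simp
  qed
  have "\<beta> = \<beta>l" using K1 K2 K3 by simp
  then show ?thesis using bm bl_eq b blp by simp
qed




lemma mix:
  fixes F :: "'a \<times> 'b \<Rightarrow> real"
  assumes P: "prob_space M" and fin: "finite S" and ne: "S \<noteq> {}"
    and Fm: "F \<in> borel_measurable (M \<Otimes>\<^sub>M measure_pmf (pmf_of_set S))"
    and Fi: "\<And>s. s \<in> S \<Longrightarrow> integrable M (\<lambda>\<omega>. F (\<omega>, s))"
  shows "integrable (M \<Otimes>\<^sub>M measure_pmf (pmf_of_set S)) F"
    and "integral\<^sup>L (M \<Otimes>\<^sub>M measure_pmf (pmf_of_set S)) F = ExpM M (\<lambda>\<omega>. (\<Sum>s\<in>S. F (\<omega>, s)) / card S)"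
proof -
  interpret pair_sigma_finite M "measure_pmf (pmf_of_set S)"
    by (intro pair_sigma_finite.intro prob_space_imp_sigma_finite P prob_space_measure_pmf)
  have ip: "integral\<^sup>L (measure_pmf (pmf_of_set S)) g = (\<Sum>s\<in>S. g s) / card S" for g :: "'b \<Rightarrow> real"
    by (rule integral_pmf_of_set[OF ne fin])
  have i2: "integrable (measure_pmf (pmf_of_set S)) g" for g :: "'b \<Rightarrow> real"
    by (rule integrable_measure_pmf_finite) (simp add: fin ne)
  show I: "integrable (M \<Otimes>\<^sub>M measure_pmf (pmf_of_set S)) F"
  proof (rule Fubini_integrable[OF Fm])
    show "integrable M (\<lambda>x. \<integral>y. norm (F (x, y)) \<partial>measure_pmf (pmf_of_set S))"
      unfolding ip by (intro integrable_divide_zero Bochner_Integration.integrable_sum integrable_norm) (auto intro: Fi)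
    show "AE x in M. integrable (measure_pmf (pmf_of_set S)) (\<lambda>y. F (x, y))"
      by (simp add: i2)
  qed
  show "integral\<^sup>L (M \<Otimes>\<^sub>M measure_pmf (pmf_of_set S)) F = ExpM M (\<lambda>\<omega>. (\<Sum>s\<in>S. F (\<omega>, s)) / card S)"
    unfolding integral_fst'[OF I, symmetric] ExpM_def ip ..
qed

definition nz :: "('v::euclidean_space) \<times> bool \<Rightarrow> 'v" where
  "nz p = (if snd p then 1 else -1::real) *\<^sub>R fst p"

lemma nz_sum1: "(\<Sum>p\<in>(Basis::'v::euclidean_space set) \<times> (UNIV::bool set). t \<bullet> nz p) = 0"
  unfolding sum.cartesian_product' UNIV_bool by (simp add: nz_def)

lemma nz_sum2: "(\<Sum>p\<in>(Basis::'v::euclidean_space set) \<times> (UNIV::bool set). (t \<bullet> nz p) * (s \<bullet> nz p)) = 2 * (t \<bullet> s)"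
proof -
  have "(\<Sum>p\<in>(Basis::'v set) \<times> (UNIV::bool set). (t \<bullet> nz p) * (s \<bullet> nz p)) = (\<Sum>b\<in>(Basis::'v set). 2 * ((t \<bullet> b) * (s \<bullet> b)))"
    unfolding sum.cartesian_product' UNIV_bool by (simp add: nz_def ac_simps)
  also have "\<dots> = 2 * (t \<bullet> s)" by (simp add: sum_distrib_left[symmetric] euclidean_inner[of t s])
  finally show ?thesis .
qed

lemma card_S: "card ((Basis::'v::euclidean_space set) \<times> (UNIV::bool set)) = 2 * card (Basis::'v set)"
  by (simp add: card_cartesian_product)

lemma inner_last: "t \<bullet> (0::real, 0::real, 0::'c::euclidean_space, w) = snd (snd (snd t)) \<bullet> w"
  by (cases t) auto

lemma N_bil:
  fixes Z0 :: "'a \<Rightarrow> real \<times> real \<times> ('c::euclidean_space) \<times> ('v::euclidean_space)"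
    and \<eta> :: real
  assumes P: "prob_space M" and Z0: "vL2 M Z0"
  defines "S \<equiv> (Basis :: 'v set) \<times> (UNIV :: bool set)"
  defines "Zn \<equiv> (\<lambda>x. Z0 (fst x) + (0, 0, 0, \<eta> *\<^sub>R nz (snd x)))"
  defines "N \<equiv> distr (M \<Otimes>\<^sub>M measure_pmf (pmf_of_set S)) borel Zn"
  shows "integrable N (\<lambda>z. (a + t \<bullet> z) * (a' + s \<bullet> z))"
    and "ExpM N (\<lambda>z. (a + t \<bullet> z) * (a' + s \<bullet> z)) =
         ExpM M (\<lambda>\<omega>. (a + t \<bullet> Z0 \<omega>) * (a' + s \<bullet> Z0 \<omega>)) + \<eta>\<^sup>2 * (snd (snd (snd t)) \<bullet> snd (snd (snd s))) / real (card (Basis :: 'v set))"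
proof -
  have fin: "finite S" and ne: "S \<noteq> {}" unfolding S_def by auto
  have Z0m[measurable]: "Z0 \<in> borel_measurable M" using Z0 by (simp add: vL2_def)
  have Znm[measurable]: "Zn \<in> borel_measurable (M \<Otimes>\<^sub>M measure_pmf (pmf_of_set S))"
  proof -
    have "(\<lambda>x. nz (snd x) :: 'v) \<in> borel_measurable (M \<Otimes>\<^sub>M measure_pmf (pmf_of_set S))"
      by (rule measurable_compose[OF measurable_snd]) simp
    then show ?thesis unfolding Zn_def by measurable
  qed
  define G where "G z = (a + t \<bullet> z) * (a' + s \<bullet> z)" for z
  have Gm[measurable]: "G \<in> borel_measurable borel" unfolding G_def by measurable
  let ?t4 = "snd (snd (snd t))" and ?s4 = "snd (snd (snd s))"
  have pt: "G (Zn (\<omega>, p)) = (a + t \<bullet> Z0 \<omega> + \<eta> * (?t4 \<bullet> nz p)) * (a' + s \<bullet> Z0 \<omega> + \<eta> * (?s4 \<bullet> nz p))" for \<omega> p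
    unfolding G_def Zn_def by (simp add: inner_add_right inner_last add.assoc)
  have Fm: "(\<lambda>x. G (Zn x)) \<in> borel_measurable (M \<Otimes>\<^sub>M measure_pmf (pmf_of_set S))" by measurable
  have Fi: "integrable M (\<lambda>\<omega>. G (Zn (\<omega>, p)))" for p
    unfolding pt by (intro L2_prod_int L2_add vL2_L2[OF Z0] L2_const P)
  note mx = mix[OF P fin ne Fm Fi]
  show "integrable N (\<lambda>z. (a + t \<bullet> z) * (a' + s \<bullet> z))"
    unfolding N_def G_def[symmetric]
    by (subst integrable_distr_eq) (use mx(1) in \<open>auto simp: comp_def\<close>)
  have "ExpM N G = ExpM M (\<lambda>\<omega>. (\<Sum>p\<in>S. G (Zn (\<omega>, p))) / card S)"
    unfolding N_def ExpM_def by (subst integral_distr) (use mx(2) in \<open>auto simp: ExpM_def\<close>)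
  also have "(\<lambda>\<omega>. (\<Sum>p\<in>S. G (Zn (\<omega>, p))) / card S) =
      (\<lambda>\<omega>. (a + t \<bullet> Z0 \<omega>) * (a' + s \<bullet> Z0 \<omega>) + \<eta>\<^sup>2 * (?t4 \<bullet> ?s4) / real (card (Basis :: 'v set)))"
  proof
    fix \<omega>
    define A where "A = a + t \<bullet> Z0 \<omega>"
    define B where "B = a' + s \<bullet> Z0 \<omega>"
    have "(\<Sum>p\<in>S. G (Zn (\<omega>, p))) = (\<Sum>p\<in>S. A * B + (\<eta> * A) * (?s4 \<bullet> nz p) + (\<eta> * B) * (?t4 \<bullet> nz p) + \<eta>\<^sup>2 * ((?t4 \<bullet> nz p) * (?s4 \<bullet> nz p)))"
      unfolding pt A_def B_def by (intro sum.cong refl) (simp add: power2_eq_square algebra_simps)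
    also have "\<dots> = card S * (A * B) + (\<eta> * A) * (\<Sum>p\<in>S. ?s4 \<bullet> nz p) + (\<eta> * B) * (\<Sum>p\<in>S. ?t4 \<bullet> nz p) + \<eta>\<^sup>2 * (\<Sum>p\<in>S. (?t4 \<bullet> nz p) * (?s4 \<bullet> nz p))"
      by (simp add: sum.distrib sum_distrib_left)
    also have "\<dots> = card S * (A * B) + \<eta>\<^sup>2 * (2 * (?t4 \<bullet> ?s4))"
      unfolding S_def nz_sum1 nz_sum2 by simp
    finally have "(\<Sum>p\<in>S. G (Zn (\<omega>, p))) / card S = A * B + \<eta>\<^sup>2 * (?t4 \<bullet> ?s4) / real (card (Basis :: 'v set))"
      using ne fin unfolding S_def card_S by (simp add: field_simps)
    then show "(\<Sum>p\<in>S. G (Zn (\<omega>, p))) / card S = (a + t \<bullet> Z0 \<omega>) * (a' + s \<bullet> Z0 \<omega>) + \<eta>\<^sup>2 * (?t4 \<bullet> ?s4) / real (card (Basis :: 'v set))"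
      by (simp add: A_def B_def)
  qed
  also have "ExpM M \<dots> = ExpM M (\<lambda>\<omega>. (a + t \<bullet> Z0 \<omega>) * (a' + s \<bullet> Z0 \<omega>)) + \<eta>\<^sup>2 * (?t4 \<bullet> ?s4) / real (card (Basis :: 'v set))"
    unfolding ExpM_def
    by (subst Bochner_Integration.integral_add) (auto intro!: L2_prod_int L2_add vL2_L2[OF Z0] L2_const P simp: prob_int_const prob_integral_const[OF P] prob_space.prob_space[OF P])
  finally show "ExpM N (\<lambda>z. (a + t \<bullet> z) * (a' + s \<bullet> z)) =
         ExpM M (\<lambda>\<omega>. (a + t \<bullet> Z0 \<omega>) * (a' + s \<bullet> Z0 \<omega>)) + \<eta>\<^sup>2 * (snd (snd (snd t)) \<bullet> snd (snd (snd s))) / real (card (Basis :: 'v set))"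
    by (simp add: G_def[abs_def])
qed




lemma pair_pmf_prob: "prob_space M \<Longrightarrow> prob_space (M \<Otimes>\<^sub>M measure_pmf Q)"
proof -
  assume PM: "prob_space M"
  interpret pair_prob_space M "measure_pmf Q"
    by (simp add: pair_prob_space_def pair_sigma_finite_def prob_space_imp_sigma_finite PM prob_space_measure_pmf)
  show ?thesis by unfold_locales
qed

lemma Zn_meas:
  fixes Z0 :: "'a \<Rightarrow> real \<times> real \<times> ('c::euclidean_space) \<times> ('v::euclidean_space)"
  assumes "Z0 \<in> borel_measurable M"
  shows "(\<lambda>x. Z0 (fst x) + (0, 0, 0, \<eta> *\<^sub>R nz (snd x))) \<in> borel_measurable (M \<Otimes>\<^sub>M measure_pmf Q)"
proof -
  note assms[measurable]
  have "(\<lambda>x. nz (snd x) :: 'v) \<in> borel_measurable (M \<Otimes>\<^sub>M measure_pmf Q)"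
    by (rule measurable_compose[OF measurable_snd]) simp
  then show ?thesis by measurable
qed

lemma pd_subs:
  fixes Y X :: "'a \<Rightarrow> real" and W1 :: "'a \<Rightarrow> 'c::euclidean_space" and W2 :: "'a \<Rightarrow> 'v::euclidean_space"
  assumes pdZ: "\<forall>t. t \<noteq> 0 \<longrightarrow> vr M (\<lambda>\<omega>. t \<bullet> (Y \<omega>, X \<omega>, W1 \<omega>, W2 \<omega>)) > 0"
  shows "\<forall>t. t \<noteq> 0 \<longrightarrow> vr M (\<lambda>\<omega>. t \<bullet> (X \<omega>, W1 \<omega>)) > 0"
    and "\<forall>t. t \<noteq> 0 \<longrightarrow> vr M (\<lambda>\<omega>. t \<bullet> (X \<omega>, W1 \<omega>, W2 \<omega>)) > 0"
    and "\<forall>t. t \<noteq> 0 \<longrightarrow> vr M (\<lambda>\<omega>. t \<bullet> (W1 \<omega>, W2 \<omega>)) > 0"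
    and "\<forall>t. t \<noteq> 0 \<longrightarrow> vr M (\<lambda>\<omega>. t \<bullet> W1 \<omega>) > 0"
proof (safe)
  fix t :: "real \<times> 'c" assume "t \<noteq> 0"
  then have "(0::real, fst t, snd t, 0::'v) \<noteq> 0" by (cases t) (auto simp: zero_prod_def)
  then have "vr M (\<lambda>\<omega>. (0::real, fst t, snd t, 0::'v) \<bullet> (Y \<omega>, X \<omega>, W1 \<omega>, W2 \<omega>)) > 0" using pdZ by blast
  then show "vr M (\<lambda>\<omega>. t \<bullet> (X \<omega>, W1 \<omega>)) > 0" by (cases t) simp
next
  fix t :: "real \<times> 'c \<times> 'v" assume "t \<noteq> 0"
  then have "(0::real, t) \<noteq> 0" by (auto simp: zero_prod_def)
  then have "vr M (\<lambda>\<omega>. (0::real, t) \<bullet> (Y \<omega>, X \<omega>, W1 \<omega>, W2 \<omega>)) > 0" using pdZ by blast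
  then show "vr M (\<lambda>\<omega>. t \<bullet> (X \<omega>, W1 \<omega>, W2 \<omega>)) > 0" by simp
next
  fix t :: "'c \<times> 'v" assume "t \<noteq> 0"
  then have "(0::real, 0::real, t) \<noteq> 0" by (auto simp: zero_prod_def)
  then have "vr M (\<lambda>\<omega>. (0::real, 0::real, t) \<bullet> (Y \<omega>, X \<omega>, W1 \<omega>, W2 \<omega>)) > 0" using pdZ by blast
  then show "vr M (\<lambda>\<omega>. t \<bullet> (W1 \<omega>, W2 \<omega>)) > 0" by simp
next
  fix t :: "'c" assume "t \<noteq> 0"
  then have "(0::real, 0::real, t, 0::'v) \<noteq> 0" by (auto simp: zero_prod_def)
  then have "vr M (\<lambda>\<omega>. (0::real, 0::real, t, 0::'v) \<bullet> (Y \<omega>, X \<omega>, W1 \<omega>, W2 \<omega>)) > 0" using pdZ by blast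
  then show "vr M (\<lambda>\<omega>. t \<bullet> W1 \<omega>) > 0" by simp
qed

lemma int_sq_sum:
  fixes N :: "'b measure" and h :: "'b \<Rightarrow> 'w::euclidean_space"
  assumes "\<And>i. i \<in> Basis \<Longrightarrow> integrable N (\<lambda>z. (i \<bullet> h z)\<^sup>2)"
  shows "integrable N (\<lambda>z. (norm (h z))\<^sup>2)"
proof -
  have e: "(norm (h z))\<^sup>2 = (\<Sum>i\<in>Basis. (i \<bullet> h z)\<^sup>2)" for z
    unfolding power2_norm_eq_inner by (subst euclidean_inner) (simp add: power2_eq_square inner_commute)
  show ?thesis unfolding e by (intro Bochner_Integration.integrable_sum assms)
qed




lemma L2_eq: "L2 M f \<Longrightarrow> (\<And>x. f x = g x) \<Longrightarrow> L2 M g"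
proof -
  assume "L2 M f" "\<And>x. f x = g x"
  then show ?thesis by (metis ext)
qed

lemma int_eq: "integrable M f \<Longrightarrow> (\<And>x. f x = g x) \<Longrightarrow> integrable M g"
proof -
  assume "integrable M f" "\<And>x. f x = g x"
  then show ?thesis by (metis ext)
qed

lemma part2:
  fixes M :: "'a measure"
    and Y X :: "'a \<Rightarrow> real"
    and W1 :: "'a \<Rightarrow> real^'d1"
    and W2 :: "'a \<Rightarrow> real^'d2"
    and g1 :: "real^'d1"
  assumes P: "prob_space M"
    and sm: "second_moments M Y X W1 W2"
    and A: "A1_pd M Y X W1 W2"
  shows "\<exists>(N :: (real \<times> real \<times> (real^'d1) \<times> (real^'d2)) measure).
         prob_space N \<and> sets N = sets borel
       \<and> distr N borel (\<lambda>(y, x, w1, w2). (y, x, w1)) = distr M borel (\<lambda>\<omega>. (Y \<omega>, X \<omega>, W1 \<omega>))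
       \<and> second_moments N (\<lambda>(y, x, w1, w2). y) (\<lambda>(y, x, w1, w2). x) (\<lambda>(y, x, w1, w2). w1) (\<lambda>(y, x, w1, w2). w2)
       \<and> A1_pd N (\<lambda>(y, x, w1, w2). y) (\<lambda>(y, x, w1, w2). x) (\<lambda>(y, x, w1, w2). w1) (\<lambda>(y, x, w1, w2). w2)
       \<and> pi2 N (\<lambda>(y, x, w1, w2). x) (\<lambda>(y, x, w1, w2). w1) (\<lambda>(y, x, w1, w2). w2) = 0
       \<and> gamma1 N (\<lambda>(y, x, w1, w2). y) (\<lambda>(y, x, w1, w2). x) (\<lambda>(y, x, w1, w2). w1) (\<lambda>(y, x, w1, w2). w2) = g1"
proof -
  note F = sm_facts[OF sm]
  have LY: "L2 M Y" and LX: "L2 M X" and V1: "vL2 M W1" and V2: "vL2 M W2" using F by auto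
  have pdZ: "\<forall>t. t \<noteq> 0 \<longrightarrow> vr M (\<lambda>\<omega>. t \<bullet> (Y \<omega>, X \<omega>, W1 \<omega>, W2 \<omega>)) > 0"
    by (rule pd_of_A1[OF P sm A])
  note pdsM = pd_subs[OF pdZ]
  define Rm where "Rm \<omega> = (X \<omega>, W1 \<omega>)" for \<omega>
  have VRm: "vL2 M Rm" unfolding Rm_def by (intro vL2_Pair L2_vL2 LX V1)
  have pdm: "\<forall>t. t \<noteq> 0 \<longrightarrow> vr M (\<lambda>\<omega>. t \<bullet> Rm \<omega>) > 0" using pdsM(1) by (simp add: Rm_def)
  obtain c b where om: "orth M (\<lambda>\<omega>. Y \<omega> - c - b \<bullet> Rm \<omega>) Rm"
    using proj_exists[OF P VRm LY pdm] by blast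
  obtain q0 q1 where oq: "orth M (\<lambda>\<omega>. X \<omega> - q0 - q1 \<bullet> W1 \<omega>) W1"
    using proj_exists[OF P V1 LX pdsM(4)] by blast
  obtain \<beta> \<gamma> where b: "b = (\<beta>, \<gamma>)" by (cases b)
  define u where "u \<omega> = Y \<omega> - c - b \<bullet> Rm \<omega>" for \<omega>
  have Lu: "L2 M u" unfolding u_def by (intro L2_diff LY L2_const P vL2_L2[OF VRm])
  have ou: "orth M u Rm" using om by (simp add: u_def[abs_def])
  have Eu: "ExpM M u = 0" using ou by (simp add: orth_def)
  define Xq where "Xq \<omega> = X \<omega> - q0 - q1 \<bullet> W1 \<omega>" for \<omega>
  have LXq: "L2 M Xq" unfolding Xq_def by (intro L2_diff LX L2_const P vL2_L2[OF V1])
  have oXq: "orth M Xq W1" using oq by (simp add: Xq_def[abs_def])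
  have uXq: "ExpM M (\<lambda>\<omega>. u \<omega> * Xq \<omega>) = 0"
  proof -
    have "Xq \<omega> = -q0 + (1, -q1) \<bullet> Rm \<omega>" for \<omega> by (simp add: Xq_def Rm_def)
    then show ?thesis using orth_aff[OF P ou Lu VRm, of "-q0" "(1, -q1)"] by simp
  qed
  define Eu2 where "Eu2 = ExpM M (\<lambda>\<omega>. (u \<omega>)\<^sup>2)"
  have Eu2_pos: "Eu2 > 0"
  proof -
    have ne: "(1::real, -\<beta>, -\<gamma>, 0::real^'d2) \<noteq> 0" by (simp add: zero_prod_def)
    have ueq: "u \<omega> = -c + (1::real, -\<beta>, -\<gamma>, 0::real^'d2) \<bullet> (Y \<omega>, X \<omega>, W1 \<omega>, W2 \<omega>)" for \<omega>
      by (simp add: u_def b Rm_def)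
    have LZ: "L2 M (\<lambda>\<omega>. (1::real, -\<beta>, -\<gamma>, 0::real^'d2) \<bullet> (Y \<omega>, X \<omega>, W1 \<omega>, W2 \<omega>))"
      by (intro vL2_L2 vL2_Pair L2_vL2 LY LX V1 V2)
    have "0 < vr M (\<lambda>\<omega>. (1::real, -\<beta>, -\<gamma>, 0::real^'d2) \<bullet> (Y \<omega>, X \<omega>, W1 \<omega>, W2 \<omega>))"
      using pdZ ne by blast
    also have "\<dots> = vr M u" unfolding ueq by (rule vr_shift[symmetric, OF P LZ])
    also have "\<dots> \<le> Eu2" unfolding Eu2_def by (rule Exp_sq_ge_vr[OF P Lu])
    finally show ?thesis .
  qed
  define \<delta> where "\<delta> = \<gamma> - g1"
  define V where "V \<omega> = u \<omega> / 2 + \<delta> \<bullet> W1 \<omega>" for \<omega>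
  have LV: "L2 M V" unfolding V_def
    using L2_cmult[OF Lu, of "1/2"] by (intro L2_add vL2_L2[OF V1]) simp
  define n where "n = real (card (Basis :: (real^'d2) set))"
  have npos: "n > 0" unfolding n_def by simp
  define \<eta> where "\<eta> = sqrt (n * Eu2) / 2"
  have eta2: "\<eta>\<^sup>2 = n * Eu2 / 4"
    unfolding \<eta>_def using npos Eu2_pos by (simp add: power_divide)
  have "n * Eu2 / 4 > 0" using npos Eu2_pos by simp
  then have eta_pos: "\<eta>\<^sup>2 > 0" unfolding eta2 .
  define e0 where "e0 = (SOME i. i \<in> (Basis :: (real^'d2) set))"
  have e0B: "e0 \<in> Basis" unfolding e0_def by (rule someI_ex) (use nonempty_Basis in blast)
  have e0e0: "e0 \<bullet> e0 = 1" using e0B by simp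
  define Z0 where "Z0 \<omega> = (Y \<omega>, X \<omega>, W1 \<omega>, V \<omega> *\<^sub>R e0)" for \<omega>
  have VZ0: "vL2 M Z0" unfolding Z0_def by (intro vL2_Pair L2_vL2 LY LX V1 vL2_scaleR LV)
  define Zn where "Zn = (\<lambda>x. Z0 (fst x) + (0, 0, 0, \<eta> *\<^sub>R nz (snd x)))"
  define MP where "MP = M \<Otimes>\<^sub>M measure_pmf (pmf_of_set ((Basis :: (real^'d2) set) \<times> (UNIV :: bool set)))"
  define N where "N = distr MP borel Zn"
  have NB1: "integrable N (\<lambda>z. (a + t \<bullet> z) * (a' + s \<bullet> z))" for a a' t s
    using N_bil(1)[OF P VZ0, of \<eta> a t a' s] unfolding N_def MP_def Zn_def .
  have NB2: "ExpM N (\<lambda>z. (a + t \<bullet> z) * (a' + s \<bullet> z)) =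
      ExpM M (\<lambda>\<omega>. (a + t \<bullet> Z0 \<omega>) * (a' + s \<bullet> Z0 \<omega>)) + \<eta>\<^sup>2 * (snd (snd (snd t)) \<bullet> snd (snd (snd s))) / n" for a a' t s
    using N_bil(2)[OF P VZ0, of \<eta> a t a' s] unfolding N_def MP_def Zn_def n_def .
  have Z0m: "Z0 \<in> borel_measurable M" using VZ0 by (simp add: vL2_def)
  have Znm: "Zn \<in> borel_measurable MP" unfolding Zn_def MP_def by (rule Zn_meas[OF Z0m])
  have PMP: "prob_space MP" unfolding MP_def by (rule pair_pmf_prob[OF P])
  have PN: "prob_space N" unfolding N_def by (rule prob_space.prob_space_distr[OF PMP Znm])
  have sN: "sets N = sets borel" unfolding N_def by simp
  have measN: "f \<in> borel_measurable N" if "continuous_on UNIV f" for f :: "_ \<Rightarrow> 'z::topological_space"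
    by (subst measurable_cong_sets[OF sN refl]) (rule borel_measurable_continuous_onI[OF that])
  have sqN: "integrable N (\<lambda>z. (t \<bullet> z)\<^sup>2)" for t
    using NB1[of 0 t 0 t] by (simp add: power2_eq_square)
  have vN: "vL2 N (\<lambda>z. z)"
    unfolding vL2_def by (intro conjI measN continuous_intros int_sq_sum sqN)
  have cy: "(\<lambda>(y::real, x::real, w1::real^'d1, w2::real^'d2). y) = (\<lambda>z. fst z)" by (simp add: fun_eq_iff split_beta)
  have cx: "(\<lambda>(y::real, x::real, w1::real^'d1, w2::real^'d2). x) = (\<lambda>z. fst (snd z))" by (simp add: fun_eq_iff split_beta)
  have cw1: "(\<lambda>(y::real, x::real, w1::real^'d1, w2::real^'d2). w1) = (\<lambda>z. fst (snd (snd z)))" by (simp add: fun_eq_iff split_beta)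
  have cw2: "(\<lambda>(y::real, x::real, w1::real^'d1, w2::real^'d2). w2) = (\<lambda>z. snd (snd (snd z)))" by (simp add: fun_eq_iff split_beta)
  have c3: "(\<lambda>(y::real, x::real, w1::real^'d1, w2::real^'d2). (y, x, w1)) = (\<lambda>z. (fst z, fst (snd z), fst (snd (snd z))))" by (simp add: fun_eq_iff split_beta)
  have Ly: "L2 N (\<lambda>z. fst z)"
    by (rule L2_eq[OF vL2_L2[OF vN, of "(1, 0, 0, 0)"]]) (simp add: inner_prod_def)
  have Lx: "L2 N (\<lambda>z. fst (snd z))"
    by (rule L2_eq[OF vL2_L2[OF vN, of "(0, 1, 0, 0)"]]) (simp add: inner_prod_def)
  have Vw1: "vL2 N (\<lambda>z. fst (snd (snd z)))"
  proof -
    have "integrable N (\<lambda>z. (i \<bullet> fst (snd (snd z)))\<^sup>2)" for i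
      by (rule int_eq[OF sqN[of "(0, 0, i, 0)"]]) (simp add: inner_prod_def)
    then show ?thesis unfolding vL2_def by (intro conjI measN continuous_intros int_sq_sum)
  qed
  have Vw2: "vL2 N (\<lambda>z. snd (snd (snd z)))"
  proof -
    have "integrable N (\<lambda>z. (i \<bullet> snd (snd (snd z)))\<^sup>2)" for i
      by (rule int_eq[OF sqN[of "(0, 0, 0, i)"]]) (simp add: inner_prod_def)
    then show ?thesis unfolding vL2_def by (intro conjI measN continuous_intros int_sq_sum)
  qed
  have smN: "second_moments N (\<lambda>z. fst z) (\<lambda>z. fst (snd z)) (\<lambda>z. fst (snd (snd z))) (\<lambda>z. snd (snd (snd z)))"
    using Ly Lx Vw1 Vw2 unfolding second_moments_def L2_def vL2_def by simp
  have pdN: "\<forall>t. t \<noteq> 0 \<longrightarrow> vr N (\<lambda>z. t \<bullet> z) > 0"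
  proof (intro allI impI)
    fix t :: "real \<times> real \<times> (real^'d1) \<times> (real^'d2)" assume t0: "t \<noteq> 0"
    define m where "m = ExpM M (\<lambda>\<omega>. t \<bullet> Z0 \<omega>)"
    have EN: "ExpM N (\<lambda>z. t \<bullet> z) = m"
      using NB2[of 0 t 1 0] by (simp add: m_def)
    have "vr N (\<lambda>z. t \<bullet> z) = ExpM N (\<lambda>z. (-m + t \<bullet> z) * (-m + t \<bullet> z))"
      unfolding vr_def EN by (simp add: power2_eq_square algebra_simps)
    also have "\<dots> = ExpM M (\<lambda>\<omega>. (t \<bullet> Z0 \<omega> - m)\<^sup>2) + \<eta>\<^sup>2 * (snd (snd (snd t)) \<bullet> snd (snd (snd t))) / n"
      unfolding NB2 by (simp add: power2_eq_square algebra_simps)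
    finally have vN_eq: "vr N (\<lambda>z. t \<bullet> z) = ExpM M (\<lambda>\<omega>. (t \<bullet> Z0 \<omega> - m)\<^sup>2) + \<eta>\<^sup>2 * (snd (snd (snd t)) \<bullet> snd (snd (snd t))) / n" .
    have nn: "ExpM M (\<lambda>\<omega>. (t \<bullet> Z0 \<omega> - m)\<^sup>2) \<ge> 0" unfolding ExpM_def by simp
    show "vr N (\<lambda>z. t \<bullet> z) > 0"
    proof (cases "snd (snd (snd t)) = 0")
      case False
      then have "snd (snd (snd t)) \<bullet> snd (snd (snd t)) > 0" by simp
      then have "\<eta>\<^sup>2 * (snd (snd (snd t)) \<bullet> snd (snd (snd t))) / n > 0" using eta_pos npos by simp
      then show ?thesis using vN_eq nn by linarith
    next
      case True
      have tz: "t \<bullet> Z0 \<omega> = t \<bullet> (Y \<omega>, X \<omega>, W1 \<omega>, W2 \<omega>)" for \<omega>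
        using True by (cases t) (auto simp: Z0_def)
      have "vr M (\<lambda>\<omega>. t \<bullet> (Y \<omega>, X \<omega>, W1 \<omega>, W2 \<omega>)) > 0" using pdZ t0 by blast
      moreover have "vr M (\<lambda>\<omega>. t \<bullet> (Y \<omega>, X \<omega>, W1 \<omega>, W2 \<omega>)) = ExpM M (\<lambda>\<omega>. (t \<bullet> Z0 \<omega> - m)\<^sup>2)"
        unfolding vr_def m_def tz ..
      moreover have "\<eta>\<^sup>2 * (snd (snd (snd t)) \<bullet> snd (snd (snd t))) / n \<ge> 0" using True by simp
      ultimately show ?thesis using vN_eq by linarith
    qed
  qed
  have A1N: "A1_pd N (\<lambda>z. fst z) (\<lambda>z. fst (snd z)) (\<lambda>z. fst (snd (snd z))) (\<lambda>z. snd (snd (snd z)))"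
    unfolding A1_pd_def using var_pos_def_iff[OF PN vN] pdN by simp
  have pdZN: "\<forall>t. t \<noteq> 0 \<longrightarrow> vr N (\<lambda>z. t \<bullet> (fst z, fst (snd z), fst (snd (snd z)), snd (snd (snd z)))) > 0"
    using pdN by simp
  note pdsN = pd_subs[OF pdZN]
  define Rl where "Rl z = (fst (snd z), fst (snd (snd z)), snd (snd (snd z)))" for z :: "real \<times> real \<times> (real^'d1) \<times> (real^'d2)"
  have VRl: "vL2 N Rl" unfolding Rl_def by (intro vL2_Pair L2_vL2 Lx Vw1 Vw2)
  have pdl: "\<forall>t. t \<noteq> 0 \<longrightarrow> vr N (\<lambda>z. t \<bullet> Rl z) > 0" using pdsN(2) by (simp add: Rl_def)
  define T where "T = (1::real, -\<beta>, -g1, -e0)"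
  have T0: "-c + T \<bullet> Z0 \<omega> = u \<omega> / 2" for \<omega>
    by (simp add: T_def Z0_def V_def u_def b Rm_def \<delta>_def e0e0 inner_diff_left algebra_simps) (simp add: field_simps)
  have el: "fst z - c - (\<beta>, g1, e0) \<bullet> Rl z = -c + T \<bullet> z" for z
    by (cases z) (simp add: Rl_def T_def)
  have oN: "orth N (\<lambda>z. fst z - c - (\<beta>, g1, e0) \<bullet> Rl z) Rl"
    unfolding orth_def el
  proof (intro conjI allI)
    have "ExpM N (\<lambda>z. -c + T \<bullet> z) = ExpM N (\<lambda>z. (-c + T \<bullet> z) * (1 + 0 \<bullet> z))" by simp
    also have "\<dots> = ExpM M (\<lambda>\<omega>. u \<omega> / 2)" unfolding NB2 T0 by simp
    also have "\<dots> = 0" using Eu by (simp add: ExpM_def)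
    finally show "ExpM N (\<lambda>z. -c + T \<bullet> z) = 0" .
  next
    fix t :: "real \<times> (real^'d1) \<times> (real^'d2)"
    obtain t1 t2 t3 where t: "t = (t1, t2, t3)" by (cases t) auto
    have rl: "t \<bullet> Rl z = 0 + (0, t) \<bullet> z" for z by (cases z) (simp add: Rl_def t)
    have pt: "u \<omega> / 2 * (0 + (0, t) \<bullet> Z0 \<omega>) = (1/2) * (u \<omega> * (0 + (t1, t2 + (t3 \<bullet> e0) *\<^sub>R \<delta>) \<bullet> Rm \<omega>)) + ((t3 \<bullet> e0) / 4) * (u \<omega>)\<^sup>2" for \<omega>
      by (simp add: t Z0_def V_def Rm_def inner_add_left power2_eq_square algebra_simps)
    have "ExpM N (\<lambda>z. (-c + T \<bullet> z) * (t \<bullet> Rl z)) = ExpM N (\<lambda>z. (-c + T \<bullet> z) * (0 + (0, t) \<bullet> z))"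
      unfolding rl ..
    also have "\<dots> = ExpM M (\<lambda>\<omega>. u \<omega> / 2 * (0 + (0, t) \<bullet> Z0 \<omega>)) + \<eta>\<^sup>2 * ((-e0) \<bullet> t3) / n"
      unfolding NB2 T0 by (simp add: T_def t)
    also have "ExpM M (\<lambda>\<omega>. u \<omega> / 2 * (0 + (0, t) \<bullet> Z0 \<omega>)) = (1/2) * ExpM M (\<lambda>\<omega>. u \<omega> * (0 + (t1, t2 + (t3 \<bullet> e0) *\<^sub>R \<delta>) \<bullet> Rm \<omega>)) + ((t3 \<bullet> e0) / 4) * Eu2"
      unfolding pt Eu2_def ExpM_def
      by (subst Bochner_Integration.integral_add)
         (auto intro!: L2_prod_int Lu L2_add L2_const P vL2_L2[OF VRm] simp: Lu[unfolded L2_def])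
    also have "ExpM M (\<lambda>\<omega>. u \<omega> * (0 + (t1, t2 + (t3 \<bullet> e0) *\<^sub>R \<delta>) \<bullet> Rm \<omega>)) = 0"
      by (rule orth_aff[OF P ou Lu VRm])
    finally show "ExpM N (\<lambda>z. (-c + T \<bullet> z) * (t \<bullet> Rl z)) = 0"
      using npos by (simp add: eta2 inner_commute field_simps)
  qed
  have g1N: "lin_proj N (\<lambda>z. fst z) Rl = (c, (\<beta>, g1, e0))"
    by (rule proj_char[OF PN VRl Ly pdl oN])
  define Rx where "Rx z = (fst (snd (snd z)), snd (snd (snd z)))" for z :: "real \<times> real \<times> (real^'d1) \<times> (real^'d2)"
  have VRx: "vL2 N Rx" unfolding Rx_def by (intro vL2_Pair L2_vL2 Vw1 Vw2)
  have pdx: "\<forall>t. t \<noteq> 0 \<longrightarrow> vr N (\<lambda>z. t \<bullet> Rx z) > 0" using pdsN(3) by (simp add: Rx_def)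
  define T' where "T' = (0::real, 1::real, -q1, 0::real^'d2)"
  have T'0: "-q0 + T' \<bullet> Z0 \<omega> = Xq \<omega>" for \<omega>
    by (simp add: T'_def Z0_def Xq_def)
  have ex: "fst (snd z) - q0 - (q1, 0::real^'d2) \<bullet> Rx z = -q0 + T' \<bullet> z" for z
    by (cases z) (simp add: Rx_def T'_def)
  have oxN: "orth N (\<lambda>z. fst (snd z) - q0 - (q1, 0::real^'d2) \<bullet> Rx z) Rx"
    unfolding orth_def ex
  proof (intro conjI allI)
    have "ExpM N (\<lambda>z. -q0 + T' \<bullet> z) = ExpM N (\<lambda>z. (-q0 + T' \<bullet> z) * (1 + 0 \<bullet> z))" by simp
    also have "\<dots> = ExpM M Xq" unfolding NB2 T'0 by (simp add: T'_def)
    also have "\<dots> = 0" using oXq by (simp add: orth_def)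
    finally show "ExpM N (\<lambda>z. -q0 + T' \<bullet> z) = 0" .
  next
    fix t :: "(real^'d1) \<times> (real^'d2)"
    obtain t1 t2 where t: "t = (t1, t2)" by (cases t) auto
    have rx: "t \<bullet> Rx z = 0 + (0, 0, t1, t2) \<bullet> z" for z by (cases z) (simp add: Rx_def t)
    have pt: "Xq \<omega> * (0 + (0, 0, t1, t2) \<bullet> Z0 \<omega>) = Xq \<omega> * (0 + (t1 + (t2 \<bullet> e0) *\<^sub>R \<delta>) \<bullet> W1 \<omega>) + ((t2 \<bullet> e0) / 2) * (u \<omega> * Xq \<omega>)" for \<omega>
      by (simp add: Z0_def V_def inner_add_left algebra_simps)
    have "ExpM N (\<lambda>z. (-q0 + T' \<bullet> z) * (t \<bullet> Rx z)) = ExpM N (\<lambda>z. (-q0 + T' \<bullet> z) * (0 + (0, 0, t1, t2) \<bullet> z))"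
      unfolding rx ..
    also have "\<dots> = ExpM M (\<lambda>\<omega>. Xq \<omega> * (0 + (0, 0, t1, t2) \<bullet> Z0 \<omega>))"
      unfolding NB2 T'0 by (simp add: T'_def)
    also have "\<dots> = ExpM M (\<lambda>\<omega>. Xq \<omega> * (0 + (t1 + (t2 \<bullet> e0) *\<^sub>R \<delta>) \<bullet> W1 \<omega>)) + ((t2 \<bullet> e0) / 2) * ExpM M (\<lambda>\<omega>. u \<omega> * Xq \<omega>)"
      unfolding pt ExpM_def
      by (subst Bochner_Integration.integral_add)
         (auto intro!: L2_prod_int LXq Lu L2_add L2_const P vL2_L2[OF V1] simp: L2_prod_int[OF Lu LXq])
    also have "ExpM M (\<lambda>\<omega>. Xq \<omega> * (0 + (t1 + (t2 \<bullet> e0) *\<^sub>R \<delta>) \<bullet> W1 \<omega>)) = 0"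
      by (rule orth_aff[OF P oXq LXq V1])
    finally show "ExpM N (\<lambda>z. (-q0 + T' \<bullet> z) * (t \<bullet> Rx z)) = 0"
      using uXq by simp
  qed
  have piN: "lin_proj N (\<lambda>z. fst (snd z)) Rx = (q0, (q1, 0))"
    by (rule proj_char[OF PN VRx Lx pdx oxN])
  have dist: "distr N borel (\<lambda>z. (fst z, fst (snd z), fst (snd (snd z)))) = distr M borel (\<lambda>\<omega>. (Y \<omega>, X \<omega>, W1 \<omega>))"
  proof -
    have Ym[measurable]: "Y \<in> borel_measurable M" "X \<in> borel_measurable M" "W1 \<in> borel_measurable M"
      using sm by (auto simp: second_moments_def)
    have hm: "(\<lambda>\<omega>. (Y \<omega>, X \<omega>, W1 \<omega>)) \<in> borel_measurable M" by measurable
    have pm: "(\<lambda>z::real \<times> real \<times> (real^'d1) \<times> (real^'d2). (fst z, fst (snd z), fst (snd (snd z)))) \<in> borel_measurable borel"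
      by (intro borel_measurable_continuous_onI continuous_intros)
    have "distr N borel (\<lambda>z. (fst z, fst (snd z), fst (snd (snd z))))
        = distr MP borel ((\<lambda>z. (fst z, fst (snd z), fst (snd (snd z)))) \<circ> Zn)"
      unfolding N_def by (rule distr_distr[OF pm Znm])
    also have "(\<lambda>z. (fst z, fst (snd z), fst (snd (snd z)))) \<circ> Zn = (\<lambda>\<omega>. (Y \<omega>, X \<omega>, W1 \<omega>)) \<circ> fst"
      by (simp add: fun_eq_iff Zn_def Z0_def)
    also have "distr MP borel \<dots> = distr (distr MP M fst) borel (\<lambda>\<omega>. (Y \<omega>, X \<omega>, W1 \<omega>))"
      unfolding MP_def by (rule distr_distr[symmetric, OF hm measurable_fst])
    also have "distr MP M fst = M"
      unfolding MP_def by (rule prob_space.distr_pair_fst[OF prob_space_measure_pmf])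
    finally show ?thesis .
  qed
  show ?thesis
  proof (intro exI conjI)
    show "prob_space N" by (rule PN)
    show "sets N = sets borel" by (rule sN)
    show "distr N borel (\<lambda>(y, x, w1, w2). (y, x, w1)) = distr M borel (\<lambda>\<omega>. (Y \<omega>, X \<omega>, W1 \<omega>))"
      unfolding c3 by (rule dist)
    show "second_moments N (\<lambda>(y, x, w1, w2). y) (\<lambda>(y, x, w1, w2). x) (\<lambda>(y, x, w1, w2). w1) (\<lambda>(y, x, w1, w2). w2)"
      unfolding cy cx cw1 cw2 by (rule smN)
    show "A1_pd N (\<lambda>(y, x, w1, w2). y) (\<lambda>(y, x, w1, w2). x) (\<lambda>(y, x, w1, w2). w1) (\<lambda>(y, x, w1, w2). w2)"
      unfolding cy cx cw1 cw2 by (rule A1N)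
    show "pi2 N (\<lambda>(y, x, w1, w2). x) (\<lambda>(y, x, w1, w2). w1) (\<lambda>(y, x, w1, w2). w2) = 0"
      unfolding cx cw1 cw2 pi2_def using piN by (simp add: Rx_def[abs_def])
    show "gamma1 N (\<lambda>(y, x, w1, w2). y) (\<lambda>(y, x, w1, w2). x) (\<lambda>(y, x, w1, w2). w1) (\<lambda>(y, x, w1, w2). w2) = g1"
      unfolding cy cx cw1 cw2 gamma1_def long_proj_def using g1N by (simp add: Rl_def[abs_def])
  qed
qed



theorem mainTheorem5:
  fixes M :: "'a measure"
    and Y X :: "'a \<Rightarrow> real"
    and W1 :: "'a \<Rightarrow> real^'d1"
    and W2 :: "'a \<Rightarrow> real^'d2"
  assumes "prob_space M"
    and "second_moments M Y X W1 W2"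
    and "A1_pd M Y X W1 W2"
    and "pi2 M X W1 W2 = 0"
  shows "beta_long M Y X W1 W2 = beta_med M Y X W1
    \<and> (\<forall>g1 :: (real^'d1). \<exists>(N :: (real \<times> real \<times> (real^'d1) \<times> (real^'d2)) measure).
         prob_space N \<and> sets N = sets borel
       \<and> distr N borel (\<lambda>(y, x, w1, w2). (y, x, w1)) = distr M borel (\<lambda>\<omega>. (Y \<omega>, X \<omega>, W1 \<omega>))
       \<and> second_moments N (\<lambda>(y, x, w1, w2). y) (\<lambda>(y, x, w1, w2). x) (\<lambda>(y, x, w1, w2). w1) (\<lambda>(y, x, w1, w2). w2)
       \<and> A1_pd N (\<lambda>(y, x, w1, w2). y) (\<lambda>(y, x, w1, w2). x) (\<lambda>(y, x, w1, w2). w1) (\<lambda>(y, x, w1, w2). w2)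
       \<and> pi2 N (\<lambda>(y, x, w1, w2). x) (\<lambda>(y, x, w1, w2). w1) (\<lambda>(y, x, w1, w2). w2) = 0
       \<and> gamma1 N (\<lambda>(y, x, w1, w2). y) (\<lambda>(y, x, w1, w2). x) (\<lambda>(y, x, w1, w2). w1) (\<lambda>(y, x, w1, w2). w2) = g1)"
  using part1[OF assms] part2[OF assms(1-3)] by blast

end
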